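(* Let $G$ be a finite group of order greater than $1$ and let $q$ be the smallest prime divisor of $|G|$. Then ${\rm mf}_{pp}(G)\leq q$ if and only if $\mathcal{F}_{pp}(G)=\{1\}$ or $\mathcal{F}_{pp}(G)=\{1,q\}$.
   Context: All groups are finite. For a group $G$ and a positive integer $n$ dividing $|G|$, let $F_n(G)=\{g\in G\mid g^n=1\}$. By Frobenius' theorem $|F_n(G)|=f_n\cdot n$ for a positive integer $f_n$, called the Frobenius quotient of $G$ for $n$. ${\rm exp}(G)$ denotes the exponent of $G$. A prime-power divisor of ${\rm exp}(G)$ is a positive divisor $n$ of ${\rm exp}(G)$ of the form $n=p^k$ with $p$ prime and $k\geq 0$ (so $n=1$ is included). $\mathcal{F}_{pp}(G)=\{f_n\mid n \text{ is a prime-power divisor of } {\rm exp}(G)\}$ and ${\rm mf}_{pp}(G)$ is the maximum element of $\mathcal{F}_{pp}(G)$. *)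

theory Defs
  imports "HOL-Algebra.Algebra" "HOL-Computational_Algebra.Primes"
begin

definition group_exp :: "('a, 'b) monoid_scheme \<Rightarrow> nat" where
  "group_exp G = Lcm ((group.ord G) ` carrier G)"

definition sol_set :: "('a, 'b) monoid_scheme \<Rightarrow> nat \<Rightarrow> 'a set" where
  "sol_set G n = {g \<in> carrier G. g [^]\<^bsub>G\<^esub> n = \<one>\<^bsub>G\<^esub>}"

text \<open>Frobenius quotient f_n = |F_n(G)| / n (an integer when n divides |G|).\<close>
definition frob_quot :: "('a, 'b) monoid_scheme \<Rightarrow> nat \<Rightarrow> nat" where
  "frob_quot G n = card (sol_set G n) div n"

definition pp_divisors :: "('a, 'b) monoid_scheme \<Rightarrow> nat set" where
  "pp_divisors G = {n. n dvd group_exp G \<and> (\<exists>p k. Factorial_Ring.prime p \<and> n = p ^ k)}"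

definition F_pp :: "('a, 'b) monoid_scheme \<Rightarrow> nat set" where
  "F_pp G = frob_quot G ` pp_divisors G"

definition mf_pp :: "('a, 'b) monoid_scheme \<Rightarrow> nat" where
  "mf_pp G = Max (F_pp G)"

end

theory Submission
  imports Defs
begin


lemma sum_split_nat: "(\<Sum>t<a+b. f t) = (\<Sum>t<a. f t) + (\<Sum>t<b. f (a+t))" for f :: "nat \<Rightarrow> nat"
  by (induction b) (auto simp: add.assoc)

lemma geom_mult: "(\<Sum>t<m*r. c^t) = (\<Sum>t<m. c^t) * (\<Sum>s<r. (c^m)^s)" for c :: nat
proof (induction r)
  case 0 then show ?case by simp
next
  case (Suc r)
  have "(\<Sum>t<m * Suc r. c^t) = (\<Sum>t<m*r + m. c^t)" by (simp add: add.commute)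
  also have "\<dots> = (\<Sum>t<m*r. c^t) + (\<Sum>t<m. c^(m*r+t))" by (rule sum_split_nat)
  also have "(\<Sum>t<m. c^(m*r+t)) = (c^m)^r * (\<Sum>t<m. c^t)"
    by (simp add: power_add power_mult sum_distrib_left)
  finally show ?case using Suc by (simp add: algebra_simps)
qed

lemma geom_p:
  assumes "Factorial_Ring.prime (p::nat)" "c mod p = 1"
  shows "p dvd (\<Sum>s<p. c^s)"
proof -
  have p1: "p > 1" using assms(1) prime_gt_1_nat by blast
  have "(\<Sum>s<p. c^s) mod p = (\<Sum>s<p. c^s mod p) mod p" by (simp add: mod_sum_eq)
  also have "(\<Sum>s<p. c^s mod p) = (\<Sum>s<p. 1)"
  proof (rule sum.cong)
    fix s assume "s \<in> {..<p}"
    have "c^s mod p = (c mod p)^s mod p" by (simp add: power_mod)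
    then show "c^s mod p = 1" using assms(2) p1 by simp
  qed simp
  finally show ?thesis by (simp add: dvd_eq_mod_eq_0)
qed

lemma geom_pk:
  assumes "Factorial_Ring.prime (p::nat)" "c mod p = 1"
  shows "p^k dvd (\<Sum>t<p^k. c^t)"
proof (induction k)
  case 0 then show ?case by simp
next
  case (Suc k)
  have "(c^(p^k)) mod p = 1"
    using assms prime_gt_1_nat[OF assms(1)] by (metis power_mod power_one mod_less)
  then have "p dvd (\<Sum>s<p. (c^(p^k))^s)" using geom_p[OF assms(1)] by blast
  moreover have "(\<Sum>t<p^Suc k. c^t) = (\<Sum>t<p^k. c^t) * (\<Sum>s<p. (c^(p^k))^s)"
    using geom_mult[where m="p^k" and r=p and c=c] by (simp add: mult.commute)
  ultimately show ?case using Suc by (metis mult_dvd_mono power_Suc2)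
qed

lemma geom_identity: "c * (\<Sum>t<m. c^t) + 1 = (\<Sum>t<m. c^t) + c^m" for c :: nat
  by (induction m) (auto simp: algebra_simps)

lemma mod_plus1: "n \<ge> 2 \<Longrightarrow> (x + 1) mod n = 1 \<Longrightarrow> x mod n = (0::nat)"
proof -
  assume n: "n \<ge> 2" and h: "(x + 1) mod n = 1"
  have lt: "x mod n < n" using n by simp
  have h2: "(x mod n + 1) mod n = 1" using h by (simp only: mod_add_left_eq)
  show ?thesis
  proof (cases "x mod n + 1 < n")
    case True then show ?thesis using h2 by simp
  next
    case False then have "x mod n + 1 = n" using lt by simp
    then show ?thesis using h2 by simp
  qed
qed

lemma geom_main:
  assumes p: "Factorial_Ring.prime (p::nat)" and n: "n = p^k" "k \<ge> 1" and c: "c^n mod n = 1"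
  shows "n dvd (\<Sum>t<n. c^t)"
proof (cases "c mod p = 1")
  case True then show ?thesis using geom_pk[OF p True] n by simp
next
  case False
  have p1: "p > 1" using p prime_gt_1_nat by blast
  have "p^1 \<le> p^k" using p1 n(2) by (intro power_increasing) auto
  then have n2: "n \<ge> 2" using n(1) p1 by simp
  have c0: "c \<noteq> 0"
  proof
    assume "c = 0" then have c0': "c^n = 0" using n2 by simp
    have "c^n mod n = 0" unfolding c0' by simp
    then show False using c by simp
  qed
  then obtain c' where c': "c = Suc c'" by (cases c) auto
  define S where "S = (\<Sum>t<n. c^t)"
  have "c * S + 1 = S + c^n" unfolding S_def by (rule geom_identity)
  then have eq: "c' * S + 1 = c^n" unfolding c' by simp
  have "(c' * S + 1) mod n = 1" using eq c by simp
  then have "c' * S mod n = 0" by (rule mod_plus1[OF n2])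
  then have dv: "n dvd c' * S" by (simp add: dvd_eq_mod_eq_0)
  have "\<not> p dvd c'"
  proof
    assume "p dvd c'"
    then obtain d where "c' = p * d" by blast
    then have "c = 1 + d * p" using c' by simp
    then have "c mod p = 1 mod p" by (simp only: mod_mult_self1)
    then have "c mod p = 1" using p1 by simp
    then show False using False by simp
  qed
  then have "coprime p c'" using p by (simp add: prime_imp_coprime)
  then have cop: "coprime n c'" using n(1) by simp
  have "n dvd S" using coprime_dvd_mult_right_iff[OF cop] dv by simp
  then show ?thesis unfolding S_def .
qed



context group begin

lemma inv_cancel_l: "a \<in> carrier G \<Longrightarrow> w \<in> carrier G \<Longrightarrow> inv a \<otimes> (a \<otimes> w) = w"
  by (simp add: m_assoc[symmetric])

lemma inv_cancel_l2: "a \<in> carrier G \<Longrightarrow> w \<in> carrier G \<Longrightarrow> a \<otimes> (inv a \<otimes> w) = w"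
  by (simp add: m_assoc[symmetric])

lemma conj_pow_elem:
  assumes "a \<in> carrier G" "v \<in> carrier G"
  shows "(a \<otimes> v \<otimes> inv a) [^] (t::nat) = a \<otimes> v [^] t \<otimes> inv a"
proof (induction t)
  case 0 then show ?case using assms by simp
next
  case (Suc t)
  have "(a \<otimes> v \<otimes> inv a) [^] Suc t = (a \<otimes> v [^] t \<otimes> inv a) \<otimes> (a \<otimes> v \<otimes> inv a)"
    using Suc by simp
  also have "\<dots> = a \<otimes> (v [^] t \<otimes> v) \<otimes> inv a"
    using assms by (simp add: m_assoc inv_cancel_l)
  finally show ?case by simp
qed

lemma ord_conj:
  assumes "a \<in> carrier G" "v \<in> carrier G"
  shows "ord (a \<otimes> v \<otimes> inv a) = ord v"
proof -
  have "\<And>t::nat. (a \<otimes> v \<otimes> inv a) [^] t = \<one> \<longleftrightarrow> v [^] t = \<one>"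
  proof -
    fix t :: nat
    have "(a \<otimes> v \<otimes> inv a) [^] t = a \<otimes> v [^] t \<otimes> inv a" by (rule conj_pow_elem[OF assms])
    moreover have "a \<otimes> v [^] t \<otimes> inv a = \<one> \<longleftrightarrow> v [^] t = \<one>"
      using assms by (metis inv_closed m_assoc m_closed nat_pow_closed r_inv r_one l_cancel_one' inv_inv r_cancel_one')
    ultimately show "(a \<otimes> v \<otimes> inv a) [^] t = \<one> \<longleftrightarrow> v [^] t = \<one>" by simp
  qed
  then show ?thesis using assms
    by (metis ord_unique pow_eq_id m_closed inv_closed)
qed

lemma conj_iter:
  assumes "a \<in> carrier G" "y \<in> carrier G" "a \<otimes> y \<otimes> inv a = y [^] (c::nat)"
  shows "a [^] (j::nat) \<otimes> y \<otimes> inv (a [^] j) = y [^] (c ^ j)"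
proof (induction j)
  case 0 then show ?case using assms by simp
next
  case (Suc j)
  have e1: "a [^] Suc j = a \<otimes> a [^] j" by (rule nat_pow_Suc2[OF assms(1)])
  have e2: "inv (a [^] Suc j) = inv (a [^] j) \<otimes> inv a" unfolding e1 using assms by (simp add: inv_mult_group)
  have "a [^] Suc j \<otimes> y \<otimes> inv (a [^] Suc j) = a \<otimes> (a [^] j \<otimes> y \<otimes> inv (a [^] j)) \<otimes> inv a"
    unfolding e2 unfolding e1 using assms by (simp add: m_assoc)
  also have "\<dots> = a \<otimes> y [^] (c ^ j) \<otimes> inv a" using Suc by simp
  also have "\<dots> = (a \<otimes> y \<otimes> inv a) [^] (c ^ j)" by (rule conj_pow_elem[OF assms(1,2), symmetric])
  also have "\<dots> = y [^] (c ^ Suc j)" using assms by (simp add: nat_pow_pow)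
  finally show ?case .
qed

lemma conj_comm:
  assumes "a \<in> carrier G" "y \<in> carrier G" "a \<otimes> y \<otimes> inv a = y [^] (c::nat)"
  shows "a \<otimes> y [^] (i::nat) = y [^] (c * i) \<otimes> a"
proof -
  have "a \<otimes> y [^] i \<otimes> inv a = y [^] (c * i)"
    using conj_pow_elem[OF assms(1,2), of i] assms by (simp add: nat_pow_pow)
  then have "a \<otimes> y [^] i \<otimes> inv a \<otimes> a = y [^] (c * i) \<otimes> a" by simp
  then show ?thesis using assms by (simp add: m_assoc)
qed

lemma prod_pow:
  assumes "z \<in> carrier G" "y \<in> carrier G" "z \<otimes> y \<otimes> inv z = y [^] (c::nat)"
  shows "(y [^] (i::nat) \<otimes> z) [^] (m::nat) = y [^] (i * (\<Sum>t<m. c^t)) \<otimes> z [^] m"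
proof (induction m)
  case 0 then show ?case using assms by simp
next
  case (Suc m)
  have "(y [^] i \<otimes> z) [^] Suc m = (y [^] i \<otimes> z) \<otimes> (y [^] i \<otimes> z) [^] m"
    using assms by (intro nat_pow_Suc2) simp
  also have "\<dots> = y [^] i \<otimes> (z \<otimes> y [^] (i * (\<Sum>t<m. c^t))) \<otimes> z [^] m"
    unfolding Suc using assms by (simp add: m_assoc)
  also have "\<dots> = y [^] i \<otimes> (y [^] (c * (i * (\<Sum>t<m. c^t))) \<otimes> z) \<otimes> z [^] m"
    using conj_comm[OF assms] by simp
  also have "\<dots> = (y [^] i \<otimes> y [^] (c * (i * (\<Sum>t<m. c^t)))) \<otimes> (z \<otimes> z [^] m)"
    using assms by (simp add: m_assoc)
  also have "\<dots> = y [^] (i + c * (i * (\<Sum>t<m. c^t))) \<otimes> z [^] Suc m"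
    using assms by (simp add: nat_pow_mult nat_pow_Suc2[symmetric] del: nat_pow_Suc)
  also have "i + c * (i * (\<Sum>t<m. c^t)) = i * (\<Sum>t<Suc m. c^t)"
  proof -
    have gs: "(\<Sum>t<Suc m. c^t) = 1 + c * (\<Sum>t<m. c^t)"
      unfolding sum.lessThan_Suc_shift by (simp add: sum_distrib_left del: sum.lessThan_Suc)
    show ?thesis unfolding gs by (simp add: algebra_simps)
  qed
  finally show ?case .
qed

lemma pow_eq_mod:
  assumes "y \<in> carrier G" "y [^] (a::nat) = y [^] (b::nat)"
  shows "a mod ord y = b mod ord y"
proof (cases "b \<le> a")
  case True
  then have "y [^] (a - b) = \<one>" using assms pow_eq_div2 by blast
  then show ?thesis using True assms(1) by (simp add: mod_eq_dvd_iff_nat pow_eq_id)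
next
  case False
  then have "y [^] (b - a) = \<one>" using assms pow_eq_div2 by metis
  then have "b mod ord y = a mod ord y" using False assms(1) by (simp add: mod_eq_dvd_iff_nat pow_eq_id)
  then show ?thesis by simp
qed

end


context group begin

lemma gen_fin: "finite (carrier G) \<Longrightarrow> a \<in> carrier G \<Longrightarrow> finite (generate G {a})"
  using generate_incl[of "{a}"] finite_subset by blast

lemma gen_mem: "finite (carrier G) \<Longrightarrow> a \<in> carrier G \<Longrightarrow> u \<in> generate G {a} \<longleftrightarrow> (\<exists>k::nat. u = a [^] k)"
  using generate_pow_on_finite_carrier by auto

lemma gen_sg: "a \<in> carrier G \<Longrightarrow> subgroup (generate G {a}) G"
  by (rule generate_is_subgroup) simp

lemma gen_sub: "a \<in> carrier G \<Longrightarrow> u \<in> generate G {a} \<Longrightarrow> generate G {u} \<subseteq> generate G {a}"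
  by (rule generate_subgroup_incl) (auto intro: gen_sg)

lemma gen_self: "a \<in> carrier G \<Longrightarrow> a \<in> generate G {a}"
  by (simp add: generate.incl)

lemma gen_eq:
  assumes fin: "finite (carrier G)" and u: "u \<in> carrier G" and w: "w \<in> carrier G"
    and uw: "u \<in> generate G {w}" and o: "ord u = ord w"
  shows "generate G {u} = generate G {w}"
proof (rule card_subset_eq)
  show "finite (generate G {w})" using gen_fin[OF fin w] .
  show "generate G {u} \<subseteq> generate G {w}" using gen_sub[OF w uw] .
  show "card (generate G {u}) = card (generate G {w})"
    using generate_pow_card[OF u] generate_pow_card[OF w] o by simp
qed

lemma pow_coprime_gen:
  assumes fin: "finite (carrier G)" and a: "a \<in> carrier G" and p: "Factorial_Ring.prime p"
    and oa: "ord a dvd p^k" and d: "0 < d" "d < p"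
  shows "a \<in> generate G {a [^] d}"
proof -
  have "\<not> p dvd d" using d by (auto dest: dvd_imp_le)
  then have "coprime p d" using p by (simp add: prime_imp_coprime)
  then have "coprime (p^k) d" by simp
  then have "coprime (ord a) d" using oa by (meson coprime_divisors dvd_refl)
  then have "gcd (ord a) d = 1" by simp
  then have o: "ord (a [^] d) = ord a" using ord_pow_gen[OF a, of d] d by simp
  have "a [^] d \<in> generate G {a}" using gen_mem[OF fin a] by blast
  then have "generate G {a [^] d} = generate G {a}" using gen_eq[OF fin _ a _ o] a by simp
  then show ?thesis using gen_self[OF a] by simp
qed

lemma lemmaA:
  assumes fin: "finite (carrier G)" and p: "Factorial_Ring.prime p" and n: "n = p^k" "k \<ge> 1"
    and y: "y \<in> carrier G" "ord y = n" and x: "x \<in> carrier G" "x [^] n = \<one>"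
    and xn: "x \<notin> generate G {y}" and nm: "x \<otimes> y \<otimes> inv x \<in> generate G {y}"
  shows "p * n \<le> card (sol_set G n)"
proof -
  have p1: "p > 1" using p prime_gt_1_nat by blast
  have "p \<le> n" using n p1 by (metis One_nat_def le_trans less_imp_le_nat power_increasing power_one_right le_refl)
  then have n2: "n \<ge> 2" using p1 by simp
  obtain b where b: "x \<otimes> y \<otimes> inv x = y [^] (b::nat)" using nm gen_mem[OF fin y(1)] by blast
  have ordx: "ord x dvd p^k" using x pow_eq_id n by blast
  have sol: "y [^] i \<otimes> x [^] j \<in> sol_set G n" for i j :: nat
  proof -
    define z where "z = x [^] j"
    define c where "c = b ^ j"
    have z: "z \<in> carrier G" using x unfolding z_def by simp
    have zc: "z \<otimes> y \<otimes> inv z = y [^] c" unfolding z_def c_def using conj_iter[OF x(1) y(1) b] .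
    have zn: "z [^] n = \<one>" unfolding z_def using x
      by (metis mult.commute nat_pow_one nat_pow_pow)
    have "z [^] n \<otimes> y \<otimes> inv (z [^] n) = y [^] (c ^ n)" using conj_iter[OF z y(1) zc] .
    then have "y [^] (c ^ n) = y [^] (1::nat)" using zn y by simp
    then have "c ^ n mod n = 1 mod n" using pow_eq_mod[OF y(1)] y(2) by metis
    then have cn: "c ^ n mod n = 1" using n2 by simp
    have dv: "n dvd (\<Sum>t<n. c^t)" using geom_main[OF p n cn] .
    have "(y [^] i \<otimes> z) [^] n = y [^] (i * (\<Sum>t<n. c^t)) \<otimes> z [^] n" using prod_pow[OF z y(1) zc] .
    also have "y [^] (i * (\<Sum>t<n. c^t)) = \<one>" using y dv by (simp add: pow_eq_id)
    finally have "(y [^] i \<otimes> z) [^] n = \<one>" using zn by simp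
    then show ?thesis unfolding sol_set_def z_def using x y by simp
  qed
  have key: "i = i' \<and> j = j'"
    if ij: "i < n" "i' < n" "j \<le> j'" "j' < p" and eq: "y [^] i \<otimes> x [^] j = y [^] i' \<otimes> x [^] j'"
    for i i' j j' :: nat
  proof -
    define d where "d = j' - j"
    have "x [^] j' = x [^] d \<otimes> x [^] j" unfolding d_def using ij x by (simp add: nat_pow_mult)
    then have "y [^] i \<otimes> x [^] j = (y [^] i' \<otimes> x [^] d) \<otimes> x [^] j" using eq x y by (simp add: m_assoc)
    then have e2: "y [^] i = y [^] i' \<otimes> x [^] d" using x y by (simp add: r_cancel)
    show ?thesis
    proof (cases "d = 0")
      case True
      then have "y [^] i = y [^] i'" using e2 y by simp
      then have "i mod n = i' mod n" using pow_eq_mod[OF y(1)] y(2) by metis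
      then show ?thesis using ij True d_def by simp
    next
      case False
      have "x [^] d = inv (y [^] i') \<otimes> y [^] i" using e2 x y by (simp add: inv_cancel_l)
      moreover have "y [^] i \<in> generate G {y}" "y [^] i' \<in> generate G {y}" using gen_mem[OF fin y(1)] by blast+
      ultimately have xd: "x [^] d \<in> generate G {y}" using gen_sg[OF y(1)]
        by (simp add: subgroup.m_closed subgroup.m_inv_closed)
      have "x \<in> generate G {x [^] d}" using pow_coprime_gen[OF fin x(1) p ordx] False d_def ij by simp
      then have "x \<in> generate G {y}" using gen_sub[OF y(1) xd] by blast
      then show ?thesis using xn by simp
    qed
  qed
  define f where "f = (\<lambda>(i,j). y [^] (i::nat) \<otimes> x [^] (j::nat))"
  have inj: "inj_on f ({..<n} \<times> {..<p})"
  proof (rule inj_onI)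
    fix u v assume u: "u \<in> {..<n} \<times> {..<p}" and v: "v \<in> {..<n} \<times> {..<p}" and fe: "f u = f v"
    obtain i j where u': "u = (i,j)" by force
    obtain i' j' where v': "v = (i',j')" by force
    have "i = i' \<and> j = j'"
    proof (cases "j \<le> j'")
      case True then show ?thesis using key[of i i' j j'] u v fe u' v' f_def by auto
    next
      case False then show ?thesis using key[of i' i j' j] u v fe u' v' f_def by auto
    qed
    then show "u = v" using u' v' by simp
  qed
  have sub: "f ` ({..<n} \<times> {..<p}) \<subseteq> sol_set G n" using sol f_def by auto
  have finS: "finite (sol_set G n)" using fin unfolding sol_set_def by simp
  have "card (f ` ({..<n} \<times> {..<p})) = n * p" using inj by (simp add: card_image card_cartesian_product)
  then show ?thesis using card_mono[OF finS sub] by (simp add: mult.commute)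
qed

end


lemma card_T:
  assumes "(p::nat) > 0" "n = p * m"
  shows "card {t. t < n \<and> \<not> p dvd t} = n - m"
proof -
  have eq: "{t. t < n \<and> p dvd t} = (\<lambda>s. p * s) ` {..<m}"
  proof
    show "{t. t < n \<and> p dvd t} \<subseteq> (\<lambda>s. p * s) ` {..<m}"
    proof
      fix t assume "t \<in> {t. t < n \<and> p dvd t}"
      then obtain s where "t = p * s" "p * s < p * m" using assms by auto
      then show "t \<in> (\<lambda>s. p * s) ` {..<m}" by auto
    qed
    show "(\<lambda>s. p * s) ` {..<m} \<subseteq> {t. t < n \<and> p dvd t}" using assms by auto
  qed
  have c1: "card {t. t < n \<and> p dvd t} = m"
    unfolding eq using assms by (simp add: card_image inj_on_def)
  have "{t. t < n \<and> \<not> p dvd t} = {..<n} - {t. t < n \<and> p dvd t}" by auto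
  moreover have "card ({..<n} - {t. t < n \<and> p dvd t}) = card {..<n} - card {t. t < n \<and> p dvd t}"
    by (rule card_Diff_subset) auto
  ultimately have "card {t. t < n \<and> \<not> p dvd t} = card {..<n} - card {t. t < n \<and> p dvd t}"
    by simp
  then show ?thesis using c1 by simp
qed

context group begin

lemma conj_cancel:
  assumes "a \<in> carrier G" "u \<in> carrier G" "v \<in> carrier G" "a \<otimes> u \<otimes> inv a = a \<otimes> v \<otimes> inv a"
  shows "u = v"
  using assms by (metis inv_closed m_closed l_cancel r_cancel)

lemma keyK:
  assumes fin: "finite (carrier G)" and p: "Factorial_Ring.prime p" and n: "n = p^k" "k \<ge> 1"
    and g: "g \<in> carrier G" "ord g = n" and x: "x \<in> sol_set G n" "x \<notin> generate G {g}"
  shows "p * n \<le> card (sol_set G n)"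
proof -
  have xc: "x \<in> carrier G" "x [^] n = \<one>" using x(1) unfolding sol_set_def by auto
  have gn: "g [^] n = \<one>" using g by (metis pow_ord_eq_1)
  have p0: "p > 0" using p prime_gt_0_nat by blast
  have finS: "finite (sol_set G n)" using fin unfolding sol_set_def by simp
  have ogd: "ord g dvd p^k" using g n by simp
  show ?thesis
  proof (cases "x \<otimes> g \<otimes> inv x \<in> generate G {g}")
    case True then show ?thesis using lemmaA[OF fin p n g xc x(2)] by simp
  next
    case False
    define h where "h = x \<otimes> g \<otimes> inv x"
    have h: "h \<in> carrier G" "ord h = n" using ord_conj g xc h_def by auto
    have hC: "h \<notin> generate G {g}" using False h_def by simp
    show ?thesis
    proof (cases "g \<otimes> h \<otimes> inv g \<in> generate G {h}")
      case True
      show ?thesis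
      proof (cases "g \<in> generate G {h}")
        case True
        have "generate G {g} = generate G {h}" using gen_eq[OF fin g(1) h(1) True] g h by simp
        then show ?thesis using hC gen_self[OF h(1)] by simp
      next
        case False
        show ?thesis using lemmaA[OF fin p n h g(1) gn False \<open>g \<otimes> h \<otimes> inv g \<in> generate G {h}\<close>] .
      qed
    next
      case False
      note hm = False
      define w where "w = (\<lambda>i::nat. g [^] i \<otimes> h \<otimes> inv (g [^] i))"
      have w: "w i \<in> carrier G" "ord (w i) = n" for i
      proof -
        have gi: "g [^] i \<in> carrier G" using g(1) by simp
        show "w i \<in> carrier G" unfolding w_def using gi h(1) by simp
        show "ord (w i) = n" unfolding w_def using ord_conj[OF gi h(1)] h(2) by simp
      qed
      define e where "e = (\<lambda>(i,t). (w i) [^] (t::nat))"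
      define T where "T = {t. t < n \<and> \<not> p dvd t}"
      have ordt: "ord ((w i) [^] t) = n" if "t \<in> T" for i t
      proof -
        have t0: "t \<noteq> 0" using that T_def by auto
        have "\<not> p dvd t" using that T_def by auto
        then have "coprime p t" using p by (simp add: prime_imp_coprime)
        then have "coprime n t" using n by simp
        then have "gcd n t = 1" by simp
        then show ?thesis using ord_pow_gen[OF w(1), of i t] w(2) t0 by simp
      qed
      have wt_in: "(w i) [^] (t::nat) \<in> generate G {w i}" for i t
        using gen_mem[OF fin w(1)[of i], of "(w i) [^] t"] by auto
      have gen_e: "generate G {(w i) [^] t} = generate G {w i}" if "t \<in> T" for i t
      proof -
        have wc: "(w i) [^] t \<in> carrier G" using w(1)[of i] by simp
        show ?thesis using gen_eq[OF fin wc w(1)[of i] wt_in[of i t]] ordt[OF that, of i] w(2)[of i] by simp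
      qed
      have eS: "e ` ({..<p} \<times> T) \<subseteq> sol_set G n"
      proof
        fix z assume "z \<in> e ` ({..<p} \<times> T)"
        then obtain i t where z: "z = (w i) [^] (t::nat)" unfolding e_def by auto
        have "(w i) [^] n = \<one>" using w by (metis pow_ord_eq_1)
        then have "z [^] n = \<one>" unfolding z using w(1)
          by (metis mult.commute nat_pow_one nat_pow_pow)
        then show "z \<in> sol_set G n" unfolding sol_set_def z using w(1) by simp
      qed
      have CS: "generate G {g} \<subseteq> sol_set G n"
      proof
        fix z assume "z \<in> generate G {g}"
        then obtain m where z: "z = g [^] (m::nat)" using gen_mem[OF fin g(1)] by blast
        have "z [^] n = \<one>" unfolding z using g(1) gn
          by (metis mult.commute nat_pow_one nat_pow_pow)
        then show "z \<in> sol_set G n" unfolding sol_set_def z using g(1) by simp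
      qed
      have disj: "e ` ({..<p} \<times> T) \<inter> generate G {g} = {}"
      proof (rule ccontr)
        assume "e ` ({..<p} \<times> T) \<inter> generate G {g} \<noteq> {}"
        then obtain i t where t: "t \<in> T" and inC: "(w i) [^] t \<in> generate G {g}" unfolding e_def by auto
        have wc: "(w i) [^] t \<in> carrier G" using w(1)[of i] by simp
        have "generate G {(w i) [^] t} = generate G {g}"
          using gen_eq[OF fin wc g(1) inC] ordt[OF t, of i] g by simp
        then have "generate G {w i} = generate G {g}" using gen_e[OF t, of i] by simp
        then have wiC: "w i \<in> generate G {g}" using gen_self[OF w(1)[of i]] by simp
        have gi: "g [^] i \<in> generate G {g}" using gen_mem[OF fin g(1), of "g [^] i"] by auto
        have "h = inv (g [^] i) \<otimes> w i \<otimes> g [^] i"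
          unfolding w_def using g h by (simp add: m_assoc inv_cancel_l)
        moreover have "inv (g [^] i) \<otimes> w i \<otimes> g [^] i \<in> generate G {g}"
          using gen_sg[OF g(1)] gi wiC by (simp add: subgroup.m_closed subgroup.m_inv_closed)
        ultimately show False using hC by simp
      qed
      have key: "i = i' \<and> t = t'"
        if it: "i \<le> i'" "i' < p" "t \<in> T" "t' \<in> T" and eq: "(w i) [^] t = (w i') [^] t'" for i i' t t'
      proof -
        have "generate G {w i} = generate G {w i'}" using gen_e[OF it(3), of i] gen_e[OF it(4), of i'] eq by simp
        then have "w i' \<in> generate G {w i}" using gen_self[OF w(1)[of i']] by simp
        then obtain m where m: "w i' = (w i) [^] (m::nat)" using gen_mem[OF fin w(1)[of i]] by blast
        show ?thesis
        proof (cases "i = i'")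
          case True
          then have "(w i) [^] t = (w i) [^] t'" using eq by simp
          then have "t mod n = t' mod n" using pow_eq_mod[OF w(1)[of i]] w(2)[of i] by metis
          then show ?thesis using True it T_def by simp
        next
          case False
          define d where "d = i' - i"
          have d: "0 < d" "d < p" using False it d_def by auto
          have gd: "g [^] d \<in> carrier G" using g by simp
          have gi: "g [^] i \<in> carrier G" using g by simp
          have split: "g [^] i' = g [^] i \<otimes> g [^] d" using g it d_def by (simp add: nat_pow_mult)
          have "w i' = g [^] i \<otimes> (g [^] d \<otimes> h \<otimes> inv (g [^] d)) \<otimes> inv (g [^] i)"
            unfolding w_def split using g h by (simp add: m_assoc inv_mult_group)
          moreover have "(w i) [^] m = g [^] i \<otimes> h [^] m \<otimes> inv (g [^] i)"
            unfolding w_def by (rule conj_pow_elem[OF gi h(1)])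
          ultimately have "g [^] d \<otimes> h \<otimes> inv (g [^] d) = h [^] m"
            using m conj_cancel[OF gi _ _] gd h by simp
          then have ci: "(g [^] d) [^] (j::nat) \<otimes> h \<otimes> inv ((g [^] d) [^] j) = h [^] (m ^ j)" for j
            using conj_iter[OF gd h(1)] by simp
          have "g \<in> generate G {g [^] d}" using pow_coprime_gen[OF fin g(1) p ogd d] .
          then obtain j where "g = (g [^] d) [^] (j::nat)" using gen_mem[OF fin gd] by blast
          then have "g \<otimes> h \<otimes> inv g = h [^] (m ^ j)" using ci[of j] by simp
          then have "g \<otimes> h \<otimes> inv g \<in> generate G {h}" using gen_mem[OF fin h(1), of "g \<otimes> h \<otimes> inv g"] by auto
          then show ?thesis using hm by simp
        qed
      qed
      have inj: "inj_on e ({..<p} \<times> T)"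
      proof (rule inj_onI)
        fix u v assume u: "u \<in> {..<p} \<times> T" and v: "v \<in> {..<p} \<times> T" and fe: "e u = e v"
        obtain i t where u': "u = (i,t)" by force
        obtain i' t' where v': "v = (i',t')" by force
        have "i = i' \<and> t = t'"
        proof (cases "i \<le> i'")
          case True then show ?thesis using key[of i i' t t'] u v fe u' v' e_def by auto
        next
          case False then show ?thesis using key[of i' i t' t] u v fe u' v' e_def by auto
        qed
        then show "u = v" using u' v' by simp
      qed
      obtain m' where nm: "n = p * m'" using n by (metis dvd_power dvd_def not_one_le_zero neq0_conv)
      have cT: "card T = n - m'" unfolding T_def using card_T[OF p0 nm] .
      have cC: "card (generate G {g}) = n" using generate_pow_card[OF g(1)] g by simp
      have finC: "finite (generate G {g})" using gen_fin[OF fin g(1)] .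
      have finT: "finite T" unfolding T_def by simp
      have cE: "card (e ` ({..<p} \<times> T)) = p * (n - m')"
        using inj cT finT by (simp add: card_image card_cartesian_product)
      have "card (generate G {g} \<union> e ` ({..<p} \<times> T)) = n + p * (n - m')"
        using card_Un_disjoint[OF finC finite_imageI[OF finite_cartesian_product[OF finite_lessThan finT]]] disj cC cE
        by (simp add: Int_commute)
      moreover have "n + p * (n - m') = p * n" using nm p0
        by (simp add: diff_mult_distrib2 mult.commute)
      moreover have "card (generate G {g} \<union> e ` ({..<p} \<times> T)) \<le> card (sol_set G n)"
        using card_mono[OF finS] CS eS by simp
      ultimately show ?thesis by simp
    qed
  qed
qed

end


lemma pp_dvd_Lcm:
  fixes A :: "nat set"
  assumes "finite A" "Factorial_Ring.prime p" "k \<ge> 1" "p^k dvd Lcm A"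
  shows "\<exists>a\<in>A. p^k dvd a"
  using assms
proof (induction A rule: finite_induct)
  case empty
  then have "p^k = 1" by simp
  moreover have "p^k > 1" using empty prime_gt_1_nat by (metis one_less_power not_one_le_zero neq0_conv)
  ultimately show ?case by linarith
next
  case (insert a A)
  have dv: "p^k dvd lcm a (Lcm A)" using insert.prems by simp
  show ?case
  proof (cases "a = 0")
    case True then show ?thesis by auto
  next
    case a0: False
    show ?thesis
    proof (cases "Lcm A = 0")
      case True then have "0 \<in> A" using Lcm_0_iff[OF insert.hyps(1)] by simp
      then show ?thesis by auto
    next
      case False
      have np: "\<not> is_unit p" using insert.prems(1) not_prime_unit by blast
      have l0: "lcm a (Lcm A) \<noteq> 0" using a0 False by (simp add: lcm_eq_0_iff)
      have "k \<le> multiplicity p (lcm a (Lcm A))" using dv l0 np by (intro multiplicity_geI) auto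
      then have "k \<le> multiplicity p a \<or> k \<le> multiplicity p (Lcm A)"
        using multiplicity_lcm[OF a0 False] insert.prems(1) by (simp add: le_max_iff_disj)
      then show ?thesis
      proof
        assume "k \<le> multiplicity p a"
        then have "p^k dvd a" by (rule multiplicity_dvd')
        then show ?thesis by simp
      next
        assume "k \<le> multiplicity p (Lcm A)"
        then have "p^k dvd Lcm A" by (rule multiplicity_dvd')
        then show ?thesis using insert.IH insert.prems by auto
      qed
    qed
  qed
qed

context group begin

lemma exists_ord:
  assumes fin: "finite (carrier G)" and p: "Factorial_Ring.prime p" and k: "k \<ge> 1"
    and dv: "p^k dvd group_exp G"
  shows "\<exists>g\<in>carrier G. ord g = p^k"
proof -
  have "\<exists>oo\<in>(group.ord G) ` carrier G. p^k dvd oo"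
    using pp_dvd_Lcm[OF finite_imageI[OF fin] p k] dv unfolding group_exp_def by simp
  then obtain a where a: "a \<in> carrier G" "p^k dvd ord a" by blast
  then obtain r where r: "ord a = p^k * r" by blast
  have "ord a \<ge> 1" using ord_ge_1[OF fin a(1)] .
  then have r0: "r \<noteq> 0" using r by auto
  have pk0: "p^k \<noteq> 0" using p by (simp add: prime_gt_0_nat)
  have "ord (a [^] r) = ord a div r" using ord_pow[OF a(1)] r r0 by simp
  also have "\<dots> = p^k" using r r0 by simp
  finally show ?thesis using a(1) by blast
qed

lemma gen_sol:
  assumes fin: "finite (carrier G)" and g: "g \<in> carrier G" "ord g = n"
  shows "generate G {g} \<subseteq> sol_set G n"
proof
  fix z assume "z \<in> generate G {g}"
  then obtain m where z: "z = g [^] (m::nat)" using gen_mem[OF fin g(1)] by blast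
  have gn: "g [^] n = \<one>" using g by (metis pow_ord_eq_1)
  have "z [^] n = \<one>" unfolding z using g(1) gn
    by (metis mult.commute nat_pow_one nat_pow_pow)
  then show "z \<in> sol_set G n" unfolding sol_set_def z using g(1) by simp
qed

lemma frob_cases:
  assumes fin: "finite (carrier G)"
    and qle: "\<And>p. Factorial_Ring.prime p \<Longrightarrow> p dvd order G \<Longrightarrow> q \<le> p"
    and nin: "n \<in> pp_divisors G"
  shows "frob_quot G n = 1 \<or> q \<le> frob_quot G n"
proof -
  obtain p k where p: "Factorial_Ring.prime p" and nk: "n = p^k" and dv: "n dvd group_exp G"
    using nin unfolding pp_divisors_def by blast
  show ?thesis
  proof (cases "k = 0")
    case True
    then have n1: "n = 1" using nk by simp
    have "sol_set G 1 = {\<one>}" unfolding sol_set_def by auto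
    then show ?thesis unfolding frob_quot_def n1 by simp
  next
    case False
    then have k: "k \<ge> 1" by simp
    obtain g where g: "g \<in> carrier G" "ord g = n" using exists_ord[OF fin p k] dv nk by blast
    have finS: "finite (sol_set G n)" using fin unfolding sol_set_def by simp
    have CS: "generate G {g} \<subseteq> sol_set G n" using gen_sol[OF fin g] .
    have cC: "card (generate G {g}) = n" using generate_pow_card[OF g(1)] g by simp
    have n0: "n > 0" using nk p by (simp add: prime_gt_0_nat)
    have sn: "n \<le> card (sol_set G n)" using card_mono[OF finS CS] cC by simp
    show ?thesis
    proof (cases "card (sol_set G n) < 2 * n")
      case True
      have "card (sol_set G n) div n = 1" using sn True by (intro div_nat_eqI) auto
      then show ?thesis unfolding frob_quot_def by simp
    next
      case False
      have "\<not> sol_set G n \<subseteq> generate G {g}"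
      proof
        assume "sol_set G n \<subseteq> generate G {g}"
        then have "card (sol_set G n) \<le> n" using card_mono[OF gen_fin[OF fin g(1)]] cC by metis
        then show False using False n0 by simp
      qed
      then obtain x where x: "x \<in> sol_set G n" "x \<notin> generate G {g}" by blast
      have pn: "p * n \<le> card (sol_set G n)" using keyK[OF fin p nk k g x] .
      have "p dvd order G"
      proof -
        have "p dvd n" using nk k by (simp add: dvd_power)
        moreover have "n dvd order G" using ord_dvd_group_order[OF g(1)] g by simp
        ultimately show ?thesis by (rule dvd_trans)
      qed
      then have "q \<le> p" using qle p by simp
      then have "q * n \<le> card (sol_set G n)" using pn by (meson le_trans mult_le_mono1)
      then have "(q * n) div n \<le> card (sol_set G n) div n" by (rule div_le_mono)
      then have "q \<le> card (sol_set G n) div n" using n0 by simp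
      then show ?thesis unfolding frob_quot_def by simp
    qed
  qed
qed

end

theorem corollary1p2:
  fixes G :: "('a, 'b) monoid_scheme" and q :: nat
  assumes "group G" and "finite (carrier G)" and "order G > 1"
    and "q = Min {p. Factorial_Ring.prime p \<and> p dvd order G}"
  shows "mf_pp G \<le> q \<longleftrightarrow> (F_pp G = {1} \<or> F_pp G = {1, q})"
proof -
  interpret group G by fact
  define S where "S = {p. Factorial_Ring.prime p \<and> p dvd order G}"
  have finS: "finite S"
  proof (rule finite_subset)
    show "S \<subseteq> {..order G}" unfolding S_def using assms(3) by (auto dest: dvd_imp_le)
  qed simp
  obtain p0 where "Factorial_Ring.prime p0" "p0 dvd order G"
    using prime_factor_nat[of "order G"] assms(3) by auto
  then have Sne: "S \<noteq> {}" unfolding S_def by auto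
  have qS: "q \<in> S" using Min_in[OF finS Sne] assms(4) S_def by simp
  have qle: "\<And>p. Factorial_Ring.prime p \<Longrightarrow> p dvd order G \<Longrightarrow> q \<le> p"
    using Min_le[OF finS] assms(4) S_def by simp
  have q1: "q > 1" using qS prime_gt_1_nat unfolding S_def by blast
  have cases: "\<And>f. f \<in> F_pp G \<Longrightarrow> f = 1 \<or> q \<le> f"
    unfolding F_pp_def using frob_cases[OF assms(2) qle] by blast
  have s1: "sol_set G 1 = {\<one>\<^bsub>G\<^esub>}" unfolding sol_set_def by auto
  have "1 \<in> pp_divisors G" unfolding pp_divisors_def mem_Collect_eq
    using two_is_prime_nat by (metis one_dvd power_0)
  moreover have "frob_quot G 1 = 1" unfolding frob_quot_def s1 by simp
  ultimately have oneF: "1 \<in> F_pp G" unfolding F_pp_def by force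
  have e0: "group_exp G \<noteq> 0"
  proof
    assume "group_exp G = 0"
    then have "0 \<in> (group.ord G) ` carrier G" unfolding group_exp_def
      using Lcm_0_iff[OF finite_imageI[OF assms(2)], of "group.ord G"] by simp
    then show False using ord_ge_1[OF assms(2)] by force
  qed
  have ppsub: "pp_divisors G \<subseteq> {..group_exp G}"
  proof
    fix m assume "m \<in> pp_divisors G"
    then have "m dvd group_exp G" unfolding pp_divisors_def by simp
    then have "m \<le> group_exp G" using e0 by (simp add: dvd_imp_le)
    then show "m \<in> {..group_exp G}" by simp
  qed
  have "finite (pp_divisors G)" using finite_subset[OF ppsub] by simp
  then have finF: "finite (F_pp G)" unfolding F_pp_def by (rule finite_imageI)
  have neF: "F_pp G \<noteq> {}" using oneF by blast
  show ?thesis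
  proof
    assume mq: "mf_pp G \<le> q"
    have le: "f \<le> q" if "f \<in> F_pp G" for f
    proof -
      have "f \<le> Max (F_pp G)" using Max_ge[OF finF that] .
      then show ?thesis using mq unfolding mf_pp_def by simp
    qed
    have sub: "F_pp G \<subseteq> {1, q}"
    proof
      fix f assume f: "f \<in> F_pp G"
      have "f = 1 \<or> q \<le> f" using cases[OF f] .
      then have "f = 1 \<or> f = q" using le[OF f] by linarith
      then show "f \<in> {1, q}" by simp
    qed
    show "F_pp G = {1} \<or> F_pp G = {1, q}"
    proof (cases "q \<in> F_pp G")
      case True
      have "F_pp G = {1, q}" using sub oneF True by blast
      then show ?thesis by simp
    next
      case False
      have "F_pp G = {1}" using sub oneF False by blast
      then show ?thesis by simp
    qed
  next
    assume h: "F_pp G = {1} \<or> F_pp G = {1, q}"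
    show "mf_pp G \<le> q"
    proof (cases "F_pp G = {1}")
      case True
      then have "mf_pp G = 1" unfolding mf_pp_def by simp
      then show ?thesis using q1 by simp
    next
      case False
      then have F: "F_pp G = {1, q}" using h by simp
      have "Max {1, q} = max 1 q" by simp
      then have "mf_pp G = q" unfolding mf_pp_def F using q1 by simp
      then show ?thesis by simp
    qed
  qed
qed


end
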